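(* Let $M,N\ge3$ be integers with $M$ divisible by $(7^{N+1})!$. For $1\le i\le N$ let $\theta_i=\frac1{7^i}$, let $\mu=\frac1{7^N}$ and $\Theta_k=\sum_{i=k}^N\theta_i$. For $1\le k\le N$ let $I_k$ be the sequence consisting of $N-k+1$ batches of $M$ identical items each, where the batches have item sizes $\theta_N,\theta_{N-1},\dots,\theta_k$ in this order. Then $\mathrm{OPT}(I_k)=\frac{M\,\Theta_k}{1-\mu+\theta_k}$ for every $1\le k\le N$.
   Context: Ordered Open End Bin Packing: a sequence of items with sizes in $(0,1]$ must be packed into bins in sequence order, where an item may be added to a bin only if the bin's current total size is strictly below $1$; equivalently, in each bin the total size of all items except the one appearing last in the sequence is strictly below $1$. $\mathrm{OPT}(I)$ is the minimum number of bins of such a packing of the sequence $I$. *)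

theory Defs
  imports Complex_Main
begin

text \<open>An item sequence is a list of reals (sizes in (0,1]).
  A packing assigns to each item index i < length xs a bin label f i.
  Items are packed in sequence order; item j may be added to its bin only if the
  current total size of that bin (items i < j already in it) is strictly below 1.\<close>

definition valid_oe_packing :: "real list \<Rightarrow> (nat \<Rightarrow> nat) \<Rightarrow> nat \<Rightarrow> bool" where
  "valid_oe_packing xs f m \<longleftrightarrow>
     (\<forall>i < length xs. f i < m) \<and>
     (\<forall>j < length xs. (\<Sum>i \<in> {i. i < j \<and> f i = f j}. xs ! i) < 1)"

definition OPT :: "real list \<Rightarrow> nat" where
  "OPT xs = (LEAST m. \<exists>f. valid_oe_packing xs f m)"

end

theory Submission
  imports Defs
begin


lemma nth_concat_uniform:
  "(\<forall>x\<in>set L. length (g x) = M) \<Longrightarrow> p < length L * M \<Longrightarrow>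
   concat (map g L) ! p = g (L ! (p div M)) ! (p mod M)"
proof (induction L arbitrary: p)
  case Nil then show ?case by simp
next
  case (Cons x L)
  show ?case
  proof (cases "p < M")
    case True
    then show ?thesis using Cons.prems by (simp add: nth_append)
  next
    case False
    then have "p - M < length L * M" using Cons.prems by auto
    then have "concat (map g L) ! (p - M) = g (L ! ((p - M) div M)) ! ((p - M) mod M)"
      using Cons by auto
    moreover have "(p - M) div M = p div M - 1" using False
      using le_div_geq[of M p] Cons.prems by (cases "M = 0") auto
    moreover have "(p - M) mod M = p mod M" using False by (simp add: le_mod_geq)
    moreover have "p div M \<noteq> 0" using False Cons.prems by (cases "M = 0") (auto simp: div_eq_0_iff)
    ultimately show ?thesis using False Cons.prems
      by (simp add: nth_append nth_Cons')
  qed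
qed

lemma geom6: "6 * (\<Sum>c<n. (7::nat)^c) = 7^n - 1"
proof (induction n)
  case 0 then show ?case by simp
next
  case (Suc n)
  have "(1::nat) \<le> 7^n" by simp
  then show ?case using Suc by (simp add: algebra_simps)
qed

lemma sum_blocks: "(\<Sum>p<k*M. g (p div M)) = M * (\<Sum>c<k. (g c :: nat))"
proof (induction k)
  case 0 then show ?case by simp
next
  case (Suc k)
  have "{..<Suc k * M} = {..<k*M} \<union> {k*M..<k*M+M}" by auto
  moreover have "(\<Sum>p\<in>{k*M..<k*M+M}. g (p div M)) = M * g k"
  proof -
    have "(\<Sum>p\<in>{k*M..<k*M+M}. g (p div M)) = (\<Sum>p\<in>{k*M..<k*M+M}. g k)"
      by (rule sum.cong) (auto simp: div_nat_eqI mult.commute)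
    then show ?thesis by simp
  qed
  ultimately show ?case using Suc
    by (simp add: sum.union_disjoint ivl_disj_int algebra_simps)
qed

lemma div_block: "(x::nat) div L = b \<Longrightarrow> d dvd x \<Longrightarrow> d dvd L \<Longrightarrow> 0 < d \<Longrightarrow> 0 < L \<Longrightarrow> x + d \<le> b*L + L"
proof -
  assume h: "x div L = b" "d dvd x" "d dvd L" "0 < d" "0 < L"
  have "x < b*L + L" using h by (metis add.commute div_mult_mod_eq mod_less_divisor nat_add_left_cancel_less mult.commute)
  moreover have "d dvd b*L + L" using h by simp
  ultimately have "d dvd (b*L + L - x)" using h by (simp add: dvd_diff_nat)
  moreover have "0 < b*L + L - x" using \<open>x < b*L + L\<close> by simp
  ultimately have "d \<le> b*L + L - x" by (simp add: dvd_imp_le)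
  then show ?thesis using \<open>x < b*L + L\<close> by simp
qed



locale cfg =
  fixes s M t a n B L G :: nat and xs :: "real list"
  assumes a_def: "a = 7^s" and n7: "n \<ge> 7" and M_def: "M = 6*t*(a*n - 1 + a)"
    and B_def: "B = t*(7*a-1)" and L_def: "L = a*(n-1)" and G_def: "G = t*a*(n-6)"
    and len: "length xs = Suc s * M"
    and nth: "\<And>p. p < length xs \<Longrightarrow> xs!p = real (7^(p div M)) / real (a*n)"
begin

definition w :: "nat \<Rightarrow> nat" where "w p = 7^(p div M)"

lemma a_pos: "a \<ge> 1" using a_def by simp
lemma an_pos: "a*n > 0" using a_pos n7 by simp

lemma F1: "M = 6*B + 6*G"
proof -
  have "int M = 6*int t*(int a*int n - 1 + int a)" using M_def a_pos n7
    by (simp add: of_nat_diff)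
  moreover have "int B = int t*(7*int a - 1)" using B_def a_pos by (simp add: of_nat_diff)
  moreover have "int G = int t*int a*(int n - 6)" using G_def n7 by (simp add: of_nat_diff)
  ultimately have "int M = 6*int B + 6*int G" by (simp add: algebra_simps)
  then show ?thesis by linarith
qed

lemma F3: "G*(a-1) + (M-B)*a = B*L"
proof -
  have "B \<le> M" using F1 by simp
  then have "int (G*(a-1) + (M-B)*a) = int G*(int a - 1) + (int M - int B)*int a"
    using a_pos by (simp add: of_nat_diff)
  also have "\<dots> = int B * int L"
  proof -
    have hM: "int M = 6*int t*(int a*int n - 1 + int a)" using M_def a_pos n7
      by (simp add: of_nat_diff)
    have hB: "int B = int t*(7*int a - 1)" using B_def a_pos by (simp add: of_nat_diff)
    have hG: "int G = int t*int a*(int n - 6)" using G_def n7 by (simp add: of_nat_diff)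
    have hL: "int L = int a*(int n - 1)" using L_def n7 by (simp add: of_nat_diff)
    show ?thesis unfolding hM hB hG hL by algebra
  qed
  finally show ?thesis by (metis of_nat_eq_iff of_nat_mult)
qed

lemma total: "(\<Sum>p<length xs. w p) = B*(a*n - 1 + a)"
proof -
  have "(\<Sum>p<length xs. w p) = M * (\<Sum>c<Suc s. 7^c)" unfolding w_def len by (rule sum_blocks)
  also have "6 * \<dots> = M * (7*a - 1)"
    by (simp only: mult.left_commute[of 6] geom6) (simp add: a_def)
  also have "M * (7*a - 1) = 6 * (B*(a*n - 1 + a))" by (simp add: M_def B_def mult_ac)
  finally have "6 * (\<Sum>p<length xs. w p) = 6 * (B*(a*n - 1 + a))" .
  then show ?thesis by simp
qed

lemma sum_conv: "S \<subseteq> {..<length xs} \<Longrightarrow> (\<Sum>i\<in>S. xs!i) = real (\<Sum>i\<in>S. w i) / real (a*n)"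
proof -
  assume "S \<subseteq> {..<length xs}"
  then have "(\<Sum>i\<in>S. xs!i) = (\<Sum>i\<in>S. real (w i) / real (a*n))"
    by (intro sum.cong) (auto simp: nth w_def)
  then show ?thesis by (simp add: sum_divide_distrib)
qed

lemma bin_bound:
  assumes v: "valid_oe_packing xs f m"
  shows "(\<Sum>p\<in>{p. p<length xs \<and> f p = b}. w p) \<le> a*n - 1 + a"
proof (cases "{p. p<length xs \<and> f p = b} = {}")
  case True then show ?thesis by (simp only: True) simp
next
  case False
  define P where "P = {p. p<length xs \<and> f p = b}"
  have fin: "finite P" unfolding P_def by simp
  define j where "j = Max P"
  have jP: "j \<in> P" unfolding j_def using False fin Max_in P_def by blast
  have PP: "P - {j} = {i. i < j \<and> f i = f j}"
  proof
    have jb: "f j = b" using jP P_def by simp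
    have "\<And>i. i \<in> P \<Longrightarrow> i \<le> j" unfolding j_def using fin by (simp add: Max_ge)
    then show "P - {j} \<subseteq> {i. i < j \<and> f i = f j}"
      using jb by (auto simp: P_def le_less)
    show "{i. i < j \<and> f i = f j} \<subseteq> P - {j}" using jP by (auto simp: P_def)
  qed
  have jl: "j < length xs" using jP P_def by simp
  have "(\<Sum>i\<in>{i. i < j \<and> f i = f j}. xs ! i) < 1" using v jl unfolding valid_oe_packing_def by blast
  moreover have "{i. i < j \<and> f i = f j} \<subseteq> {..<length xs}" using jl by auto
  ultimately have "real (\<Sum>i\<in>{i. i < j \<and> f i = f j}. w i) / real (a*n) < 1" using sum_conv by simp
  then have "(\<Sum>i\<in>{i. i < j \<and> f i = f j}. w i) < a*n"
    using an_pos by (simp add: divide_less_eq del: of_nat_sum of_nat_mult)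
  moreover have "w j \<le> a"
  proof -
    have "j div M \<le> s" using jl len
      by (metis less_Suc_eq_le less_mult_imp_div_less mult.commute)
    then show ?thesis unfolding w_def a_def by (simp add: power_increasing)
  qed
  moreover have "(\<Sum>p\<in>P. w p) = w j + (\<Sum>p\<in>P - {j}. w p)" using jP fin by (simp add: sum.remove)
  ultimately show ?thesis using PP P_def by simp
qed

lemma lower:
  assumes v: "valid_oe_packing xs f m"
  shows "B \<le> m"
proof -
  have im: "f ` {..<length xs} \<subseteq> {..<m}" using v unfolding valid_oe_packing_def by auto
  have "(\<Sum>p<length xs. w p) = (\<Sum>b<m. \<Sum>p\<in>{p. p \<in> {..<length xs} \<and> f p = b}. w p)"
    using sum.group[OF _ _ im, of w] by simp
  also have "\<dots> \<le> (\<Sum>b<m. a*n - 1 + a)"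
    by (intro sum_mono) (use bin_bound[OF v] in simp)
  finally have "B*(a*n - 1 + a) \<le> m*(a*n - 1 + a)" using total by simp
  moreover have "a*n - 1 + a > 0" using a_pos by simp
  ultimately show ?thesis by (metis mult_le_cancel2)
qed

end


context cfg begin

definition u :: "nat \<Rightarrow> nat" where
  "u p = G*(7^(p div M) - 1) + (if p div M < s then p mod M - 6*B else p mod M) * 7^(p div M)"
definition RR :: "nat \<Rightarrow> bool" where "RR p \<longleftrightarrow> p div M < s \<and> p mod M < 6*B"
definition ST :: "nat \<Rightarrow> bool" where
  "ST p \<longleftrightarrow> (p div M < s \<and> \<not> p mod M < 6*B) \<or> (\<not> p div M < s \<and> p mod M < M - B)"
definition pk :: "nat \<Rightarrow> nat" where
  "pk p = (if p div M < s then (if p mod M < 6*B then p mod M div 6 else u p div L)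
           else (if p mod M < M - B then u p div L else p mod M - (M - B)))"

lemma L_pos: "L > 0" using L_def a_pos n7 by simp

lemma cs: "p < length xs \<Longrightarrow> p div M \<le> s \<and> 0 < M"
  using len by (metis less_Suc_eq_le less_mult_imp_div_less mult.commute mult_0_right not_gr0 not_less0)

lemma geomG: "G*(7^(Suc c) - 1) = G*(7^c - 1) + 6*G*7^c"
proof -
  have "(1::nat) \<le> 7^c" by simp
  then have "7^(Suc c) - 1 = (7^c - 1) + 6*(7^c::nat)" by simp
  then show ?thesis by (simp add: algebra_simps)
qed

lemma st_upper:
  assumes "p < length xs" "ST p"
  shows "u p + w p \<le> (if p div M < s then G*(7^(Suc (p div M)) - 1) else B*L)"
proof (cases "p div M < s")
  case True
  let ?c = "p div M" and ?r = "p mod M"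
  have M0: "0 < M" using cs assms by blast
  have r: "6*B \<le> ?r" "?r < M" using True assms M0 by (auto simp: ST_def)
  then have "?r - 6*B + 1 \<le> 6*G" using F1 by linarith
  then have "(?r - 6*B + 1) * 7^?c \<le> 6*G*7^?c" by (rule mult_right_mono) simp
  moreover have "u p + w p = G*(7^?c - 1) + (?r - 6*B + 1) * 7^?c"
    using True unfolding u_def w_def by simp
  ultimately show ?thesis using True unfolding geomG by simp
next
  case False
  let ?c = "p div M" and ?r = "p mod M"
  have c: "?c = s" using False cs assms by force
  have "?r < M - B" using False assms by (auto simp: ST_def)
  then have "(?r + 1) * a \<le> (M - B)*a" by (intro mult_right_mono) auto
  moreover have "u p + w p = G*(a - 1) + (?r + 1) * a"
    using False c unfolding u_def w_def a_def by simp
  ultimately show ?thesis using False F3 by simp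
qed

lemma G_le: "c < c' \<Longrightarrow> G*(7^(Suc c) - 1) \<le> G*(7^c' - 1)"
  by (intro mult_left_mono diff_le_mono power_increasing) auto

lemma Ga_le: "G*(a - 1) \<le> B*L" using F3 by linarith

lemma u_lower: "G*(7^(p div M) - 1) \<le> u p" unfolding u_def by simp

lemma disj:
  assumes "p < q" "q < length xs" "ST p" "ST q"
  shows "u p + w p \<le> u q"
proof -
  have M0: "0 < M" using cs assms by blast
  have cle: "p div M \<le> q div M" using assms by (simp add: div_le_mono)
  have qs: "q div M \<le> s" using cs assms by blast
  show ?thesis
  proof (cases "p div M = q div M")
    case True
    have rr: "p mod M < q mod M" using True assms
      by (metis add_less_cancel_left div_mult_mod_eq)
    show ?thesis
    proof (cases "p div M < s")
      case True2: True
      have "6*B \<le> p mod M" using True2 assms by (auto simp: ST_def)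
      then have "p mod M - 6*B + 1 \<le> q mod M - 6*B" using rr by linarith
      then have "(p mod M - 6*B + 1) * 7^(q div M) \<le> (q mod M - 6*B) * 7^(q div M)"
        by (rule mult_right_mono) simp
      moreover have "u p + w p = G*(7^(q div M) - 1) + (p mod M - 6*B + 1) * 7^(q div M)"
        using True True2 unfolding u_def w_def by simp
      moreover have "u q = G*(7^(q div M) - 1) + (q mod M - 6*B) * 7^(q div M)"
        using True True2 unfolding u_def w_def by simp
      ultimately show ?thesis by simp
    next
      case False
      have "(p mod M + 1) * 7^(q div M) \<le> (q mod M) * 7^(q div M)"
        using rr by (intro mult_right_mono) auto
      moreover have "u p + w p = G*(7^(q div M) - 1) + (p mod M + 1) * 7^(q div M)"
        using True False unfolding u_def w_def by simp
      moreover have "u q = G*(7^(q div M) - 1) + (q mod M) * 7^(q div M)"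
        using True False unfolding u_def w_def by simp
      ultimately show ?thesis by simp
    qed
  next
    case False
    then have lt: "p div M < q div M" using cle by simp
    then have ps: "p div M < s" using qs by simp
    have "u p + w p \<le> G*(7^(Suc (p div M)) - 1)" using st_upper[of p] assms ps by simp
    also have "\<dots> \<le> G*(7^(q div M) - 1)" using G_le[OF lt] .
    also have "\<dots> \<le> u q" by (rule u_lower)
    finally show ?thesis .
  qed
qed

lemma u_bound:
  assumes "p < length xs" "ST p"
  shows "u p < B*L"
proof -
  have "w p > 0" unfolding w_def by simp
  moreover have "(if p div M < s then G*(7^(Suc (p div M)) - 1) else B*L) \<le> B*L"
  proof (cases "p div M < s")
    case True
    have "(7::nat)^(Suc (p div M)) \<le> a" unfolding a_def using True
      by (intro power_increasing) auto
    then have "G*(7^(Suc (p div M)) - 1) \<le> G*(a - 1)"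
      by (intro mult_left_mono diff_le_mono) auto
    then have "G*(7^(Suc (p div M)) - 1) \<le> B*L" using Ga_le by (rule order_trans)
    then show ?thesis using True by (simp only: if_True)
  qed simp
  ultimately show ?thesis using st_upper[OF assms] by linarith
qed

lemma align:
  assumes "p < length xs" "ST p"
  shows "w p dvd u p" "w p dvd L"
proof -
  have "p div M \<le> s" using cs assms by blast
  then have d: "w p dvd a" unfolding w_def a_def by (simp add: le_imp_power_dvd)
  have "a dvd G" unfolding G_def by simp
  then have "w p dvd G" using d by (rule dvd_trans[rotated])
  then show "w p dvd u p" unfolding u_def w_def by simp
  show "w p dvd L" using d unfolding L_def by simp
qed

lemma pk_lt:
  assumes "p < length xs"
  shows "pk p < B"
proof -
  have M0: "0 < M" using cs assms by blast
  show ?thesis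
  proof (cases "RR p")
    case True then show ?thesis unfolding pk_def RR_def by auto
  next
    case False
    show ?thesis
    proof (cases "ST p")
      case True
      then have "u p < B*L" using u_bound assms by blast
      then have "u p div L < B" by (simp add: less_mult_imp_div_less)
      then show ?thesis using True False unfolding pk_def ST_def RR_def by auto
    next
      case False2: False
      have "p mod M < M" using M0 by simp
      then show ?thesis using False False2 unfolding pk_def ST_def RR_def by auto
    qed
  qed
qed

end


context cfg begin

lemma R_bound:
  assumes bB: "b < B"
  shows "(\<Sum>q\<in>{q. q<length xs \<and> RR q \<and> q mod M div 6 = b}. w q) \<le> a - 1"
proof -
  define Dm where "Dm = {..<s} \<times> {6*b..<6*b+6}"
  define g where "g = (\<lambda>(c::nat, r::nat). c*M + r)"
  have sub: "{q. q<length xs \<and> RR q \<and> q mod M div 6 = b} \<subseteq> g ` Dm"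
  proof
    fix q assume q: "q \<in> {q. q<length xs \<and> RR q \<and> q mod M div 6 = b}"
    then have "q = g (q div M, q mod M)" unfolding g_def by simp
    moreover have "(q div M, q mod M) \<in> Dm" using q unfolding Dm_def RR_def by auto
    ultimately show "q \<in> g ` Dm" by blast
  qed
  have fD: "finite Dm" unfolding Dm_def by simp
  have "(\<Sum>q\<in>{q. q<length xs \<and> RR q \<and> q mod M div 6 = b}. w q) \<le> (\<Sum>q\<in>g ` Dm. w q)"
    by (rule sum_mono2) (use sub fD in auto)
  also have "\<dots> \<le> (\<Sum>x\<in>Dm. w (g x))" using sum_image_le[OF fD, of w g] by (simp add: comp_def)
  also have "\<dots> = (\<Sum>c<s. \<Sum>r\<in>{6*b..<6*b+6}. w (c*M + r))"
    unfolding Dm_def g_def by (auto simp: sum.cartesian_product intro!: sum.cong)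
  also have "\<dots> = (\<Sum>c<s. \<Sum>r\<in>{6*b..<6*b+6}. 7^c)"
  proof (intro sum.cong refl)
    fix c r assume "r \<in> {6*b..<6*b+6}"
    then have "r < M" using bB F1 by auto
    then show "w (c*M + r) = 7^c" unfolding w_def by simp
  qed
  also have "\<dots> = 6 * (\<Sum>c<s. 7^c)" by (simp add: sum_distrib_left)
  also have "\<dots> = a - 1" using geom6 a_def by simp
  finally show ?thesis .
qed

lemma T_bound:
  "(\<Sum>q\<in>{q. q<length xs \<and> ST q \<and> u q div L = b}. w q) \<le> L"
proof -
  define T where "T = {q. q<length xs \<and> ST q \<and> u q div L = b}"
  define J where "J = (\<lambda>q. {u q..<u q + w q})"
  have fT: "finite T" unfolding T_def by simp
  have dj: "\<forall>i\<in>T. \<forall>j\<in>T. i \<noteq> j \<longrightarrow> J i \<inter> J j = {}"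
  proof (intro ballI impI)
    fix i j assume ij: "i \<in> T" "j \<in> T" "i \<noteq> j"
    show "J i \<inter> J j = {}"
    proof (cases "i < j")
      case True
      then have "u i + w i \<le> u j" using disj ij unfolding T_def by blast
      then show ?thesis unfolding J_def by auto
    next
      case False
      then have "j < i" using ij by simp
      then have "u j + w j \<le> u i" using disj ij unfolding T_def by blast
      then show ?thesis unfolding J_def by auto
    qed
  qed
  have "(\<Sum>q\<in>T. w q) = (\<Sum>q\<in>T. card (J q))" unfolding J_def by simp
  also have "\<dots> = card (\<Union>(J ` T))" using card_UN_disjoint[OF fT _ dj] unfolding J_def by simp
  also have "\<dots> \<le> card {b*L..<b*L+L}"
  proof (rule card_mono)
    show "\<Union>(J ` T) \<subseteq> {b*L..<b*L+L}"
    proof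
      fix x assume "x \<in> \<Union>(J ` T)"
      then obtain q where q: "q \<in> T" "x \<in> J q" by blast
      have hq: "q < length xs" "ST q" "u q div L = b" using q T_def by auto
      have "b*L \<le> u q" using hq(3) by (metis div_times_less_eq_dividend)
      moreover have "u q + w q \<le> b*L + L"
        using div_block[OF hq(3) align[OF hq(1,2)]] L_pos unfolding w_def by simp
      ultimately show "x \<in> {b*L..<b*L+L}" using q(2) unfolding J_def by auto
    qed
  qed simp
  finally show ?thesis unfolding T_def by simp
qed

lemma upper_valid: "valid_oe_packing xs pk B"
  unfolding valid_oe_packing_def
proof (intro conjI allI impI)
  fix i assume "i < length xs" then show "pk i < B" by (rule pk_lt)
next
  fix j assume jl: "j < length xs"
  define b where "b = pk j"
  have bB: "b < B" using pk_lt jl b_def by simp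
  define R where "R = {q. q<length xs \<and> RR q \<and> q mod M div 6 = b}"
  define T where "T = {q. q<length xs \<and> ST q \<and> u q div L = b}"
  have M0: "0 < M" using cs jl by blast
  have sub: "{i. i < j \<and> pk i = pk j} \<subseteq> R \<union> T"
  proof
    fix q assume "q \<in> {i. i < j \<and> pk i = pk j}"
    then have q: "q < j" "pk q = b" using b_def by auto
    have ql: "q < length xs" using q jl by simp
    show "q \<in> R \<union> T"
    proof (cases "RR q")
      case True
      then have "pk q = q mod M div 6" unfolding pk_def RR_def by simp
      then show ?thesis using True q ql unfolding R_def by simp
    next
      case False
      show ?thesis
      proof (cases "ST q")
        case True
        then have "pk q = u q div L" using False unfolding pk_def RR_def ST_def by auto
        then show ?thesis using True q ql unfolding T_def by simp
      next
        case False2: False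
        have qs: "q div M = s" "M - B \<le> q mod M" using False False2 cs[OF ql]
          unfolding RR_def ST_def by auto
        have pq: "pk q = q mod M - (M - B)" using qs unfolding pk_def by simp
        have "q div M \<le> j div M" using q by (simp add: div_le_mono)
        then have js: "j div M = s" using cs[OF jl] qs by simp
        have rr: "q mod M < j mod M" using js qs q
          by (metis add_less_cancel_left div_mult_mod_eq)
        have pj: "pk j = j mod M - (M - B)" using js qs rr unfolding pk_def by simp
        have "pk q \<noteq> pk j" using pq pj rr qs by simp
        then show ?thesis using q b_def by simp
      qed
    qed
  qed
  have disjRT: "R \<inter> T = {}" unfolding R_def T_def RR_def ST_def by auto
  have "(\<Sum>i\<in>{i. i < j \<and> pk i = pk j}. w i) \<le> (\<Sum>i\<in>R \<union> T. w i)"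
    by (rule sum_mono2) (use sub in \<open>auto simp: R_def T_def\<close>)
  also have "\<dots> = (\<Sum>i\<in>R. w i) + (\<Sum>i\<in>T. w i)"
  proof -
    have "finite R" "finite T" unfolding R_def T_def by auto
    then show ?thesis using sum.union_disjoint disjRT by blast
  qed
  also have "\<dots> \<le> (a - 1) + L" using R_bound[OF bB] T_bound unfolding R_def T_def
    by (intro add_mono) auto
  also have "\<dots> < a*n"
  proof -
    have "a*(n-1) + a = a*n" using n7 by (cases n) (auto simp: algebra_simps)
    then show ?thesis unfolding L_def using a_pos by linarith
  qed
  finally have lt: "(\<Sum>i\<in>{i. i < j \<and> pk i = pk j}. w i) < a*n" .
  have "{i. i < j \<and> pk i = pk j} \<subseteq> {..<length xs}" using jl by auto
  then have "(\<Sum>i\<in>{i. i < j \<and> pk i = pk j}. xs ! i) = real (\<Sum>i\<in>{i. i < j \<and> pk i = pk j}. w i) / real (a*n)"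
    by (rule sum_conv)
  also have "\<dots> < 1" using lt an_pos by (simp add: divide_less_eq del: of_nat_sum of_nat_mult)
  finally show "(\<Sum>i\<in>{i. i < j \<and> pk i = pk j}. xs ! i) < 1" .
qed

lemma OPT_eq: "OPT xs = B"
  unfolding OPT_def
proof (rule Least_equality)
  show "\<exists>f. valid_oe_packing xs f B" using upper_valid by blast
  show "\<And>m. \<exists>f. valid_oe_packing xs f m \<Longrightarrow> B \<le> m" using lower by blast
qed

end


lemma len_concat_rep: "length (concat (map (\<lambda>i. replicate M (f i)) L)) = length L * M"
  by (induction L) auto

lemma theta_sum: "(\<Sum>i = k..k+s. 1 / (7::real)^i) = (7^(Suc s) - 1) / (6 * 7^(k+s))"
proof (induction s)
  case 0 then show ?case by (simp add: field_simps)
next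
  case (Suc s)
  have "(\<Sum>i = k..k+Suc s. 1 / (7::real)^i) = (\<Sum>i = k..k+s. 1 / (7::real)^i) + 1/7^(k + Suc s)"
    by (simp add: add_Suc_right)
  also have "\<dots> = (7^(Suc s) - 1) / (6 * 7^(k+s)) + 1/7^(k + Suc s)" using Suc by simp
  also have "\<dots> = (7^(Suc (Suc s)) - 1) / (6 * 7^(k+Suc s))"
    by (simp add: field_simps power_add)
  finally show ?case .
qed

lemma final_arith:
  fixes y z t :: real assumes y: "y > 0" and z: "z > 0" and p: "y*z - 1 + y > 0"
  shows "6*t*(y*z - 1 + y) * ((7*y - 1)/(6*(y*z))) / (1 - 1/(y*z) + 1/z) = t*(7*y-1)"
proof -
  have e: "1 - 1/(y*z) + 1/z = (y*z - 1 + y)/(y*z)" using y z by (simp add: field_simps)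
  have "6*t*(y*z - 1 + y) * ((7*y - 1)/(6*(y*z))) = t*(7*y-1) * ((y*z - 1 + y)/(y*z))"
    using y z by (simp add: field_simps)
  then show ?thesis unfolding e using p y z by simp
qed

theorem mainTheorem9:
  fixes M N :: nat
  assumes "M \<ge> 3" and "N \<ge> 3" and "fact (7 ^ (N + 1)) dvd M"
  shows "\<forall>k. 1 \<le> k \<and> k \<le> N \<longrightarrow>
    (let \<theta> = (\<lambda>i::nat. 1 / (7::real) ^ i);
         \<mu> = 1 / (7::real) ^ N;
         \<Theta> = (\<Sum>i = k..N. \<theta> i);
         I = concat (map (\<lambda>i. replicate M (\<theta> i)) (rev [k..<Suc N]))
     in real (OPT I) = real M * \<Theta> / (1 - \<mu> + \<theta> k))"
proof (intro allI impI)
  fix k assume k: "1 \<le> k \<and> k \<le> N"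
  define s where "s = N - k"
  define a where "a = (7::nat)^s"
  define n where "n = (7::nat)^k"
  define D where "D = 6*(a*n - 1 + a)"
  define t where "t = M div D"
  define B where "B = t*(7*a-1)"
  define L where "L = a*(n-1)"
  define G where "G = t*a*(n-6)"
  define I where "I = concat (map (\<lambda>i. replicate M (1 / (7::real) ^ i)) (rev [k..<Suc N]))"
  have Ns: "N = k + s" using k s_def by simp
  have an: "a*n = 7^N" unfolding a_def n_def Ns by (simp add: power_add)
  have n7: "n \<ge> 7" unfolding n_def using k
    using power_increasing[of 1 k "7::nat"] by simp
  have a1: "a \<ge> 1" unfolding a_def by simp
  have D_le: "D \<le> 7^(N+1)"
  proof -
    have "6*a \<le> a*n" using n7 by simp
    moreover have "D \<le> 6*(a*n) + 6*a" unfolding D_def by simp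
    ultimately have "D \<le> 7*(a*n)" by linarith
    then show ?thesis using an by simp
  qed
  have D_pos: "D > 0" unfolding D_def using a1 by simp
  have "D dvd fact (7^(N+1))" using D_le D_pos by (simp add: dvd_fact)
  then have "D dvd M" using assms(3) by (rule dvd_trans)
  then have MD: "M = D*t" unfolding t_def by simp
  have lenI: "length I = Suc s * M" unfolding I_def len_concat_rep using k s_def by simp
  have nthI: "I ! p = real (7^(p div M)) / real (a*n)" if p: "p < length I" for p
  proof -
    have M0: "0 < M" using p lenI by (cases M) auto
    have cs: "p div M \<le> s" using p lenI
      by (metis less_Suc_eq_le less_mult_imp_div_less mult.commute)
    have "I ! p = replicate M (1 / (7::real) ^ (rev [k..<Suc N] ! (p div M))) ! (p mod M)"
      unfolding I_def
      by (rule nth_concat_uniform[where g = "\<lambda>i. replicate M (1 / (7::real) ^ i)", simplified])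
         (use p lenI k s_def in \<open>auto simp: I_def len_concat_rep\<close>)
    also have "rev [k..<Suc N] ! (p div M) = N - p div M"
    proof -
      have l: "p div M < length [k..<Suc N]" using cs k s_def by simp
      have "rev [k..<Suc N] ! (p div M) = [k..<Suc N] ! (length [k..<Suc N] - Suc (p div M))"
        using rev_nth[OF l] .
      also have "\<dots> = k + (N - k - p div M)"
      proof -
        have e: "length [k..<Suc N] - Suc (p div M) = N - k - p div M" using cs k s_def by simp
        have "k + (N - k - p div M) < Suc N" using cs k s_def by linarith
        then show ?thesis unfolding e by (rule nth_upt)
      qed
      also have "k + (N - k - p div M) = N - p div M" using cs k s_def by linarith
      finally show ?thesis .
    qed
    finally have "I ! p = 1 / 7 ^ (N - p div M)" using M0 by simp
    also have "\<dots> = 7^(p div M) / 7^N"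
    proof -
      have "(7::real)^N = 7^(N - p div M) * 7^(p div M)"
        using cs Ns by (simp flip: power_add)
      then show ?thesis by (simp add: field_simps)
    qed
    moreover have "real (a*n) = (7::real)^N" unfolding an by simp
    ultimately show ?thesis by simp
  qed
  interpret cfg s M t a n B L G I
  proof
    show "a = 7^s" by (rule a_def)
    show "7 \<le> n" by (rule n7)
    show "M = 6*t*(a*n - 1 + a)" unfolding MD D_def by (simp only: mult_ac)
    show "B = t*(7*a-1)" by (rule B_def)
    show "L = a*(n-1)" by (rule L_def)
    show "G = t*a*(n-6)" by (rule G_def)
    show "length I = Suc s * M" by (rule lenI)
    show "\<And>p. p < length I \<Longrightarrow> I ! p = real (7^(p div M)) / real (a*n)" by (rule nthI)
  qed
  have opt: "OPT I = B" by (rule OPT_eq)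
  have Th: "(\<Sum>i = k..N. 1 / (7::real)^i) = (7*real a - 1) / (6 * (real a * real n))"
    using theta_sum[of k s] Ns an a_def by (simp add: power_add)
  have rM: "real M = 6 * real t * (real a * real n - 1 + real a)"
    using MD D_def a1 n7 by (simp add: of_nat_diff)
  have rB: "real B = real t * (7 * real a - 1)" using B_def a1 by (simp add: of_nat_diff)
  have r7N: "(7::real)^N = real a * real n" 
  proof -
    have "real (a*n) = (7::real)^N" unfolding an by simp
    then show ?thesis by simp
  qed
  have r7k: "(7::real)^k = real n" unfolding n_def by simp
  have pos: "real a * real n - 1 + real a > 0"
  proof -
    have "a*n \<ge> 1" using a1 n7 by simp
    then have "real a * real n \<ge> 1" by (metis of_nat_1 of_nat_le_iff of_nat_mult)
    then show ?thesis using a1 by linarith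
  qed
  have an_pos': "real a * real n > 0" using a1 n7 by simp
  have "real M * ((7*real a - 1) / (6 * (real a * real n))) / (1 - 1/(real a * real n) + 1/real n)
        = real t * (7 * real a - 1)"
    unfolding rM by (rule final_arith[OF _ _ pos]) (use a1 n7 in auto)
  then show "let \<theta> = (\<lambda>i::nat. 1 / (7::real) ^ i);
         \<mu> = 1 / (7::real) ^ N;
         \<Theta> = (\<Sum>i = k..N. \<theta> i);
         I = concat (map (\<lambda>i. replicate M (\<theta> i)) (rev [k..<Suc N]))
     in real (OPT I) = real M * \<Theta> / (1 - \<mu> + \<theta> k)"
    unfolding Let_def I_def[symmetric] opt Th r7N r7k rB by simp
qed

end
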